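(* Let $\Gamma$ be any context of $\lambda\mathsf{HOL}$ (possibly extended by constants and additional conversion rules) in which there are a type $A:\square$ and terms $\mathsf{intro}:T\,A\to A$ and $\mathsf{match}:A\to T\,A$ such that, for every $u:T\,A$, the term $\mathsf{match}\,(\mathsf{intro}\,u)$ is judgementally equal to $u$ (i.e. $T\,A$ is a judgemental retract of $A$). Then there is a term of type $\perp$ in $\Gamma$. In other words, in $\lambda\mathsf{HOL}$ one cannot have a type $A$ such that $\mathsf{Pow}\,(\mathsf{Pow}\,A)$ is a judgemental retract of $A$ without the system becoming inconsistent.
   Context: $\lambda\mathsf{HOL}$ (minimal higher-order logic) is the pure type system with sorts $*,\square,\Delta$, axioms $*:\square$ and $\square:\Delta$, and rules $( *,* )$, $(\square,\square)$, $(\square,* )$; judgemental equality is $\beta$-conversion. Define $\mathsf{Pow}:\square\to\square$ by $\mathsf{Pow}\,X = X\to *$ and $T:\square\to\square$ by $T\,X=\mathsf{Pow}(\mathsf{Pow}\,X)$. Define $\perp:*$ by $\perp=\forall_{p:*}\,p$ and $\neg p = p\to\perp$. *)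

theory Defs
  imports Main
begin

text \<open>Deep embedding of the pure type system lambda-HOL with de Bruijn indices.
  Constants of an extended context are modelled as declared variables of the
  context; additional conversion rules are modelled by an arbitrary relation R on
  terms, whose compatible closure together with beta generates judgemental equality.\<close>

datatype sort = Star | Box | Tri

datatype trm = Srt sort | Var nat | App trm trm | Lam trm trm | Pi trm trm

fun lift :: "nat \<Rightarrow> nat \<Rightarrow> trm \<Rightarrow> trm" where
  "lift k n (Srt s) = Srt s"
| "lift k n (Var i) = (if i < k then Var i else Var (i + n))"
| "lift k n (App t u) = App (lift k n t) (lift k n u)"
| "lift k n (Lam A b) = Lam (lift k n A) (lift (Suc k) n b)"
| "lift k n (Pi A B) = Pi (lift k n A) (lift (Suc k) n B)"

fun subst :: "trm \<Rightarrow> nat \<Rightarrow> trm \<Rightarrow> trm" where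
  "subst (Srt s') k s = Srt s'"
| "subst (Var i) k s = (if i < k then Var i else if i = k then lift 0 k s else Var (i - 1))"
| "subst (App t u) k s = App (subst t k s) (subst u k s)"
| "subst (Lam A b) k s = Lam (subst A k s) (subst b (Suc k) s)"
| "subst (Pi A B) k s = Pi (subst A k s) (subst B (Suc k) s)"

definition ax :: "sort \<Rightarrow> sort \<Rightarrow> bool" where
  "ax s1 s2 \<longleftrightarrow> (s1 = Star \<and> s2 = Box) \<or> (s1 = Box \<and> s2 = Tri)"

definition rl :: "sort \<Rightarrow> sort \<Rightarrow> bool" where
  "rl s1 s2 \<longleftrightarrow> (s1, s2) \<in> {(Star, Star), (Box, Box), (Box, Star)}"

inductive step :: "(trm \<Rightarrow> trm \<Rightarrow> bool) \<Rightarrow> trm \<Rightarrow> trm \<Rightarrow> bool" for R where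
  beta: "step R (App (Lam A b) a) (subst b 0 a)"
| extra: "R t u \<Longrightarrow> step R t u"
| appL: "step R t t' \<Longrightarrow> step R (App t u) (App t' u)"
| appR: "step R u u' \<Longrightarrow> step R (App t u) (App t u')"
| lamL: "step R A A' \<Longrightarrow> step R (Lam A b) (Lam A' b)"
| lamR: "step R b b' \<Longrightarrow> step R (Lam A b) (Lam A b')"
| piL: "step R A A' \<Longrightarrow> step R (Pi A B) (Pi A' B)"
| piR: "step R B B' \<Longrightarrow> step R (Pi A B) (Pi A B')"

definition conv :: "(trm \<Rightarrow> trm \<Rightarrow> bool) \<Rightarrow> trm \<Rightarrow> trm \<Rightarrow> bool" where
  "conv R = equivclp (step R)"

text \<open>Typing judgement \<open>hastype R \<Gamma> a A\<close>; the head of the list \<Gamma> is the type of Var 0.\<close>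
inductive hastype :: "(trm \<Rightarrow> trm \<Rightarrow> bool) \<Rightarrow> trm list \<Rightarrow> trm \<Rightarrow> trm \<Rightarrow> bool" for R where
  axiom: "ax s1 s2 \<Longrightarrow> hastype R [] (Srt s1) (Srt s2)"
| start: "hastype R \<Gamma> A (Srt s) \<Longrightarrow> hastype R (A # \<Gamma>) (Var 0) (lift 0 1 A)"
| weak: "hastype R \<Gamma> a B \<Longrightarrow> hastype R \<Gamma> C (Srt s) \<Longrightarrow> hastype R (C # \<Gamma>) (lift 0 1 a) (lift 0 1 B)"
| prod: "hastype R \<Gamma> A (Srt s1) \<Longrightarrow> hastype R (A # \<Gamma>) B (Srt s2) \<Longrightarrow> rl s1 s2 \<Longrightarrow>
         hastype R \<Gamma> (Pi A B) (Srt s2)"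
| app: "hastype R \<Gamma> f (Pi A B) \<Longrightarrow> hastype R \<Gamma> a A \<Longrightarrow> hastype R \<Gamma> (App f a) (subst B 0 a)"
| abs: "hastype R (A # \<Gamma>) b B \<Longrightarrow> hastype R \<Gamma> (Pi A B) (Srt s) \<Longrightarrow> hastype R \<Gamma> (Lam A b) (Pi A B)"
| cnv: "hastype R \<Gamma> a A \<Longrightarrow> hastype R \<Gamma> B (Srt s) \<Longrightarrow> conv R A B \<Longrightarrow> hastype R \<Gamma> a B"

definition arrow :: "trm \<Rightarrow> trm \<Rightarrow> trm" where
  "arrow A B = Pi A (lift 0 1 B)"

definition Pow :: "trm \<Rightarrow> trm" where
  "Pow X = arrow X (Srt Star)"

definition TT :: "trm \<Rightarrow> trm" where
  "TT X = Pow (Pow X)"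

definition bot :: trm where
  "bot = Pi (Srt Star) (Var 0)"

end

theory Submission
  imports Defs
begin


lemma lift_zero[simp]: "lift k 0 t = t"
  by (induction t arbitrary: k) auto

lemma lift_merge[simp]: "i \<le> k \<Longrightarrow> k \<le> i + m \<Longrightarrow> lift k n (lift i m t) = lift i (m + n) t"
  by (induction t arbitrary: i k) auto

lemma lift_comm: "i \<le> k \<Longrightarrow> lift (Suc k) n (lift i 1 t) = lift i 1 (lift k n t)"
  by (induction t arbitrary: i k) auto

lemma subst_lift_merge[simp]: "i \<le> k \<Longrightarrow> k < i + m \<Longrightarrow> subst (lift i m t) k s = lift i (m - 1) t"
  by (induction t arbitrary: i k) auto

lemma subst_lift_comm: "i \<le> k \<Longrightarrow> subst (lift i 1 t) (Suc k) s = lift i 1 (subst t k s)"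
  by (induction t arbitrary: i k) auto


lemma lift_comm0[simp]: "lift (Suc k) n (lift 0 (Suc 0) t) = lift 0 (Suc 0) (lift k n t)"
  using lift_comm[of 0 k n t] by simp
lemma subst_lift_comm0[simp]: "subst (lift 0 (Suc 0) t) (Suc k) s = lift 0 (Suc 0) (subst t k s)"
  using subst_lift_comm[of 0 k t s] by simp

lemma lift_arrow[simp]: "lift k n (arrow X Y) = arrow (lift k n X) (lift k n Y)"
  by (simp add: arrow_def lift_comm)
lemma subst_arrow[simp]: "subst (arrow X Y) k s = arrow (subst X k s) (subst Y k s)"
  by (simp add: arrow_def subst_lift_comm)
lemma lift_bot[simp]: "lift k n bot = bot" by (simp add: bot_def)
lemma subst_bot[simp]: "subst bot k s = bot" by (simp add: bot_def)

definition eqt :: "trm \<Rightarrow> trm \<Rightarrow> trm \<Rightarrow> trm" where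
  "eqt X b x = Pi (Pow X) (arrow (App (Var 0) (lift 0 1 b)) (App (Var 0) (lift 0 1 x)))"
definition memt :: "trm \<Rightarrow> trm \<Rightarrow> trm \<Rightarrow> trm \<Rightarrow> trm" where
  "memt X M b a = App (App M a) (Lam X (eqt (lift 0 1 X) (lift 0 1 b) (Var 0)))"
definition negt :: "trm \<Rightarrow> trm" where "negt X = arrow X bot"

lemma lift_eqt[simp]: "lift k n (eqt X b x) = eqt (lift k n X) (lift k n b) (lift k n x)"
  by (simp add: eqt_def Pow_def lift_comm)
lemma subst_eqt[simp]: "subst (eqt X b x) k s = eqt (subst X k s) (subst b k s) (subst x k s)"
  by (simp add: eqt_def Pow_def subst_lift_comm)
lemma lift_memt[simp]: "lift k n (memt X M b a) = memt (lift k n X) (lift k n M) (lift k n b) (lift k n a)"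
  by (simp add: memt_def lift_comm)
lemma subst_memt[simp]: "subst (memt X M b a) k s = memt (subst X k s) (subst M k s) (subst b k s) (subst a k s)"
  by (simp add: memt_def subst_lift_comm)
lemma lift_negt[simp]: "lift k n (negt X) = negt (lift k n X)" by (simp add: negt_def)
lemma subst_negt[simp]: "subst (negt X) k s = negt (subst X k s)" by (simp add: negt_def)

lemma conv_refl: "conv R t t" by (simp add: conv_def)
lemma conv_sym: "conv R t u \<Longrightarrow> conv R u t" by (simp add: conv_def equivclp_sym)
lemma conv_trans: "conv R t u \<Longrightarrow> conv R u v \<Longrightarrow> conv R t v"
  unfolding conv_def by (meson transp_equivclp transpD)
lemma conv_step: "step R t u \<Longrightarrow> conv R t u"
  unfolding conv_def equivclp_def by (simp add: r_into_rtranclp)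

lemma conv_compat:
  assumes "\<And>x y. step R x y \<Longrightarrow> step R (f x) (f y)" and "conv R t u"
  shows "conv R (f t) (f u)"
  using assms(2) unfolding conv_def
proof (induction rule: equivclp_induct)
  case base thus ?case by simp
next
  case (step y z)
  hence "equivclp (step R) (f y) (f z)"
    using assms(1) conv_step conv_sym unfolding conv_def by blast
  with step.IH show ?case by (meson transp_equivclp transpD)
qed

lemma conv_appL: "conv R t u \<Longrightarrow> conv R (App t a) (App u a)"
  using conv_compat[of R "\<lambda>x. App x a"] step.appL by blast
lemma conv_piL: "conv R t u \<Longrightarrow> conv R (Pi t B) (Pi u B)"
  using conv_compat[of R "\<lambda>x. Pi x B"] step.piL by blast
lemma conv_arrowL: "conv R t u \<Longrightarrow> conv R (arrow t B) (arrow u B)"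
  by (simp add: arrow_def conv_piL)
lemma beta_conv: "subst b 0 a = c \<Longrightarrow> conv R (App (Lam X b) a) c"
  using conv_step step.beta by metis

lemma star_ok: "hastype R D a B \<Longrightarrow> hastype R D (Srt Star) (Srt Box)"
proof (induction rule: hastype.induct)
  case (axiom s1 s2) thus ?case by (simp add: hastype.axiom ax_def)
next
  case (start \<Gamma> A s) thus ?case using hastype.weak by fastforce
next
  case (weak \<Gamma> a B C s) thus ?case using hastype.weak by fastforce
qed auto

lemma weak1: "hastype R D a B \<Longrightarrow> hastype R D C (Srt s) \<Longrightarrow> hastype R (C # D) (lift 0 1 a) (lift 0 1 B)"
  by (rule hastype.weak)

lemma var0: "hastype R D X (Srt s) \<Longrightarrow> hastype R (X # D) (Var 0) (lift 0 1 X)"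
  by (rule hastype.start)

lemma typ_arrow: "hastype R D X (Srt s1) \<Longrightarrow> hastype R D Y (Srt s2) \<Longrightarrow> rl s1 s2 \<Longrightarrow>
   hastype R D (arrow X Y) (Srt s2)"
  unfolding arrow_def using hastype.prod hastype.weak by fastforce

lemma typ_bot: "hastype R D (Srt Star) (Srt Box) \<Longrightarrow> hastype R D bot (Srt Star)"
proof -
  assume h: "hastype R D (Srt Star) (Srt Box)"
  have "hastype R (Srt Star # D) (Var 0) (Srt Star)" using var0[OF h] by simp
  thus ?thesis unfolding bot_def using hastype.prod[OF h] by (simp add: rl_def)
qed

lemma typ_pow: "hastype R D X (Srt Box) \<Longrightarrow> hastype R D (Pow X) (Srt Box)"
  unfolding Pow_def using star_ok typ_arrow by (fastforce simp: rl_def)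

lemma typ_app_arr: "hastype R D f (arrow X Y) \<Longrightarrow> hastype R D a X \<Longrightarrow> hastype R D (App f a) Y"
  unfolding arrow_def using hastype.app by fastforce

lemma typ_lam_arr: "hastype R (X # D) b (lift 0 1 Y) \<Longrightarrow> hastype R D (arrow X Y) (Srt s) \<Longrightarrow>
   hastype R D (Lam X b) (arrow X Y)"
  unfolding arrow_def by (rule hastype.abs)

lemma typ_cnv: "hastype R D a X \<Longrightarrow> conv R X Y \<Longrightarrow> hastype R D Y (Srt s) \<Longrightarrow> hastype R D a Y"
  by (rule hastype.cnv)


lemma typ_eqt:
  assumes hX: "hastype R D X (Srt Box)" and hb: "hastype R D b X" and hx: "hastype R D x X"
  shows "hastype R D (eqt X b x) (Srt Star)"
proof -
  have hP: "hastype R D (Pow X) (Srt Box)" using typ_pow[OF hX] .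
  have hv: "hastype R (Pow X # D) (Var 0) (arrow (lift 0 1 X) (Srt Star))"
    using var0[OF hP] by (simp add: Pow_def)
  have hb': "hastype R (Pow X # D) (lift 0 1 b) (lift 0 1 X)" using weak1[OF hb hP] .
  have hx': "hastype R (Pow X # D) (lift 0 1 x) (lift 0 1 X)" using weak1[OF hx hP] .
  have "hastype R (Pow X # D) (arrow (App (Var 0) (lift 0 1 b)) (App (Var 0) (lift 0 1 x))) (Srt Star)"
    using typ_arrow[OF typ_app_arr[OF hv hb'] typ_app_arr[OF hv hx']] by (simp add: rl_def)
  thus ?thesis unfolding eqt_def using hastype.prod[OF hP] by (simp add: rl_def)
qed

lemma typ_refl:
  assumes hX: "hastype R D X (Srt Box)" and hb: "hastype R D b X"
  shows "hastype R D (Lam (Pow X) (Lam (App (Var 0) (lift 0 1 b)) (Var 0))) (eqt X b b)"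
proof -
  have hP: "hastype R D (Pow X) (Srt Box)" using typ_pow[OF hX] .
  have hv: "hastype R (Pow X # D) (Var 0) (arrow (lift 0 1 X) (Srt Star))"
    using var0[OF hP] by (simp add: Pow_def)
  have hb': "hastype R (Pow X # D) (lift 0 1 b) (lift 0 1 X)" using weak1[OF hb hP] .
  have hY: "hastype R (Pow X # D) (App (Var 0) (lift 0 1 b)) (Srt Star)"
    using typ_app_arr[OF hv hb'] .
  have hYY: "hastype R (Pow X # D) (arrow (App (Var 0) (lift 0 1 b)) (App (Var 0) (lift 0 1 b))) (Srt Star)"
    using typ_arrow[OF hY hY] by (simp add: rl_def)
  have hi: "hastype R (Pow X # D) (Lam (App (Var 0) (lift 0 1 b)) (Var 0)) (arrow (App (Var 0) (lift 0 1 b)) (App (Var 0) (lift 0 1 b)))"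
    using typ_lam_arr[OF var0[OF hY] hYY] .
  show ?thesis unfolding eqt_def
    by (rule hastype.abs[OF hi]) (use typ_eqt[OF hX hb hb] in \<open>simp add: eqt_def\<close>)
qed

lemma typ_memt:
  assumes hX: "hastype R D X (Srt Box)" and hM: "hastype R D M (arrow X (TT X))"
    and hb: "hastype R D b X" and ha: "hastype R D a X"
  shows "hastype R D (memt X M b a) (Srt Star)"
proof -
  have hS: "hastype R D (Srt Star) (Srt Box)" using star_ok[OF hX] .
  have h1: "hastype R D (App M a) (arrow (arrow X (Srt Star)) (Srt Star))"
    using typ_app_arr[OF hM ha] by (simp add: TT_def Pow_def)
  have hX': "hastype R (X # D) (lift 0 1 X) (Srt Box)" using weak1[OF hX hX] by simp
  have "hastype R (X # D) (eqt (lift 0 1 X) (lift 0 1 b) (Var 0)) (Srt Star)"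
    using typ_eqt[OF hX' weak1[OF hb hX] var0[OF hX]] .
  moreover have "hastype R D (arrow X (Srt Star)) (Srt Box)" using typ_arrow[OF hX hS] by (simp add: rl_def)
  ultimately have h2: "hastype R D (Lam X (eqt (lift 0 1 X) (lift 0 1 b) (Var 0))) (arrow X (Srt Star))"
    using typ_lam_arr[of R X D _ "Srt Star"] by simp
  show ?thesis unfolding memt_def using typ_app_arr[OF h1 h2] .
qed

lemma typ_negt: "hastype R D Y (Srt Star) \<Longrightarrow> hastype R D (negt Y) (Srt Star)"
  unfolding negt_def using typ_arrow typ_bot star_ok by (fastforce simp: rl_def)


theorem theorem1:
  fixes R :: "trm \<Rightarrow> trm \<Rightarrow> bool" and \<Gamma> :: "trm list" and A intro match :: trm
  assumes "hastype R \<Gamma> A (Srt Box)"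
    and "hastype R \<Gamma> intro (arrow (TT A) A)"
    and "hastype R \<Gamma> match (arrow A (TT A))"
    and "\<And>\<Delta> u. hastype R (\<Delta> @ \<Gamma>) u (lift 0 (length \<Delta>) (TT A)) \<Longrightarrow>
           conv R (App (lift 0 (length \<Delta>) match) (App (lift 0 (length \<Delta>) intro) u)) u"
  shows "\<exists>t. hastype R \<Gamma> t bot"
proof -
  let ?G = \<Gamma> and ?I = intro and ?M = match
  note [simp] = numeral_eq_Suc
  note hA = assms(1) and hI = assms(2) and hM = assms(3) and hconv = assms(4)
  have hS: "hastype R \<Gamma> (Srt Star) (Srt Box)" using star_ok[OF hA] .
  define p where "p = Lam A (negt (memt (lift 0 1 A) (lift 0 1 match) (Var 0) (Var 0)))"
  define u where "u = Lam (Pow A) (Pi (lift 0 1 A) (arrow (App (Var 1) (Var 0)) (App (lift 0 2 p) (Var 0))))"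
  define r where "r = App intro u"
  define L where "L = Lam A (eqt (lift 0 1 A) (lift 0 1 r) (Var 0))"
  define Q where "Q = memt A match r r"
  define Q1 where "Q1 = Pi A (arrow (App (lift 0 1 L) (Var 0)) (App (lift 0 1 p) (Var 0)))"
  have hPA: "hastype R \<Gamma> (Pow A) (Srt Box)" using typ_pow[OF hA] .
  have hA1: "hastype R (A # \<Gamma>) (lift 0 1 A) (Srt Box)" using weak1[OF hA hA] by simp
  have hM1: "hastype R (A # \<Gamma>) (lift 0 1 match) (arrow (lift 0 1 A) (TT (lift 0 1 A)))"
    using weak1[OF hM hA] by (simp add: TT_def Pow_def)
  have hx: "hastype R (A # \<Gamma>) (Var 0) (lift 0 1 A)" using var0[OF hA] .
  have hp: "hastype R \<Gamma> p (Pow A)"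
  proof -
    have "hastype R (A # \<Gamma>) (negt (memt (lift 0 1 A) (lift 0 1 match) (Var 0) (Var 0))) (lift 0 1 (Srt Star))"
      using typ_negt[OF typ_memt[OF hA1 hM1 hx hx]] by simp
    thus ?thesis unfolding p_def Pow_def using typ_lam_arr hPA[unfolded Pow_def] by blast
  qed
  have hu: "hastype R \<Gamma> u (TT A)"
  proof -
    have hA1': "hastype R (Pow A # \<Gamma>) (lift 0 1 A) (Srt Box)" using weak1[OF hA hPA] by simp
    let ?D = "lift 0 1 A # Pow A # \<Gamma>"
    have hv1: "hastype R ?D (Var 1) (arrow (lift 0 2 A) (Srt Star))"
      using weak1[OF var0[OF hPA] hA1'] by (simp add: Pow_def)
    have hv0: "hastype R ?D (Var 0) (lift 0 2 A)"
      using var0[OF hA1'] by simp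
    have hp2: "hastype R ?D (lift 0 2 p) (arrow (lift 0 2 A) (Srt Star))"
      using weak1[OF weak1[OF hp hPA] hA1'] by (simp add: Pow_def)
    have "hastype R ?D (arrow (App (Var 1) (Var 0)) (App (lift 0 2 p) (Var 0))) (Srt Star)"
      using typ_arrow[OF typ_app_arr[OF hv1 hv0] typ_app_arr[OF hp2 hv0]] by (simp add: rl_def)
    hence "hastype R (Pow A # \<Gamma>) (Pi (lift 0 1 A) (arrow (App (Var 1) (Var 0)) (App (lift 0 2 p) (Var 0)))) (lift 0 1 (Srt Star))"
      using hastype.prod[OF hA1'] by (simp add: rl_def)
    moreover have "hastype R \<Gamma> (arrow (Pow A) (Srt Star)) (Srt Box)"
      using typ_arrow[OF hPA hS] by (simp add: rl_def)
    ultimately show ?thesis unfolding u_def TT_def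
      using typ_lam_arr[of R "Pow A" \<Gamma> _ "Srt Star"] by (simp add: Pow_def)
  qed
  have hr: "hastype R \<Gamma> r A" unfolding r_def using typ_app_arr[OF hI[unfolded TT_def] hu[unfolded TT_def]] .
  have hL: "hastype R \<Gamma> L (Pow A)"
  proof -
    have "hastype R (A # \<Gamma>) (eqt (lift 0 1 A) (lift 0 1 r) (Var 0)) (lift 0 1 (Srt Star))"
      using typ_eqt[OF hA1 weak1[OF hr hA] hx] by simp
    thus ?thesis unfolding L_def Pow_def using typ_lam_arr hPA[unfolded Pow_def] by blast
  qed
  have hQ: "hastype R \<Gamma> Q (Srt Star)" unfolding Q_def using typ_memt[OF hA hM hr hr] .
  have hL1: "hastype R (A # \<Gamma>) (lift 0 1 L) (arrow (lift 0 1 A) (Srt Star))"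
    using weak1[OF hL hA] by (simp add: Pow_def)
  have hp1: "hastype R (A # \<Gamma>) (lift 0 1 p) (arrow (lift 0 1 A) (Srt Star))"
    using weak1[OF hp hA] by (simp add: Pow_def)
  have hE: "hastype R (A # \<Gamma>) (App (lift 0 1 L) (Var 0)) (Srt Star)" using typ_app_arr[OF hL1 hx] .
  have hPx: "hastype R (A # \<Gamma>) (App (lift 0 1 p) (Var 0)) (Srt Star)" using typ_app_arr[OF hp1 hx] .
  have hEP: "hastype R (A # \<Gamma>) (arrow (App (lift 0 1 L) (Var 0)) (App (lift 0 1 p) (Var 0))) (Srt Star)"
    using typ_arrow[OF hE hPx] by (simp add: rl_def)
  have hQ1: "hastype R \<Gamma> Q1 (Srt Star)"
    unfolding Q1_def using hastype.prod[OF hA hEP] by (simp add: rl_def)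
  have c1: "conv R (App match r) u"
    using hconv[of "[]" u] hu r_def by simp
  have QL: "Q = App (App match r) L" by (simp add: Q_def memt_def L_def)
  have C1: "conv R Q Q1"
  proof -
    have "conv R Q (App u L)" unfolding QL using conv_appL[OF c1] .
    moreover have "conv R (App u L) Q1"
      unfolding u_def by (rule beta_conv) (simp add: Q1_def)
    ultimately show ?thesis by (rule conv_trans)
  qed
  let ?D1 = "Q1 # \<Gamma>"
  have hh: "hastype R ?D1 (Var 0) (Pi (lift 0 1 A) (arrow (App (lift 0 2 L) (Var 0)) (App (lift 0 2 p) (Var 0))))"
    using var0[OF hQ1] by (simp add: Q1_def)
  have hr1: "hastype R ?D1 (lift 0 1 r) (lift 0 1 A)" using weak1[OF hr hQ1] .
  have hhr: "hastype R ?D1 (App (Var 0) (lift 0 1 r)) (arrow (App (lift 0 1 L) (lift 0 1 r)) (App (lift 0 1 p) (lift 0 1 r)))"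
    using hastype.app[OF hh hr1] by simp
  have hA1q: "hastype R ?D1 (lift 0 1 A) (Srt Box)" using weak1[OF hA hQ1] by simp
  have hL1q: "hastype R ?D1 (lift 0 1 L) (arrow (lift 0 1 A) (Srt Star))"
    using weak1[OF hL hQ1] by (simp add: Pow_def)
  have hp1q: "hastype R ?D1 (lift 0 1 p) (arrow (lift 0 1 A) (Srt Star))"
    using weak1[OF hp hQ1] by (simp add: Pow_def)
  have hrefl: "hastype R ?D1 (Lam (Pow (lift 0 1 A)) (Lam (App (Var 0) (lift 0 1 (lift 0 1 r))) (Var 0))) (App (lift 0 1 L) (lift 0 1 r))"
  proof (rule typ_cnv[OF typ_refl[OF hA1q hr1]])
    show "conv R (eqt (lift 0 1 A) (lift 0 1 r) (lift 0 1 r)) (App (lift 0 1 L) (lift 0 1 r))"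
      by (rule conv_sym, simp add: L_def, rule beta_conv, simp)
    show "hastype R ?D1 (App (lift 0 1 L) (lift 0 1 r)) (Srt Star)" using typ_app_arr[OF hL1q hr1] .
  qed
  have hQq: "hastype R ?D1 (lift 0 1 Q) (Srt Star)" using weak1[OF hQ hQ1] by simp
  have happ: "hastype R ?D1 (App (App (Var 0) (lift 0 1 r)) (Lam (Pow (lift 0 1 A)) (Lam (App (Var 0) (lift 0 1 (lift 0 1 r))) (Var 0)))) (negt (lift 0 1 Q))"
  proof (rule typ_cnv[OF typ_app_arr[OF hhr hrefl]])
    show "conv R (App (lift 0 1 p) (lift 0 1 r)) (negt (lift 0 1 Q))"
      by (simp add: p_def, rule beta_conv, simp add: Q_def)
    show "hastype R ?D1 (negt (lift 0 1 Q)) (Srt Star)" using typ_negt[OF hQq] .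
  qed
  have hhQ: "hastype R ?D1 (Var 0) (lift 0 1 Q)"
  proof (rule typ_cnv[OF var0[OF hQ1] _ hQq])
    have c: "conv R (App (lift 0 1 match) (App (lift 0 1 intro) (lift 0 1 u))) (lift 0 1 u)"
      using hconv[of "[Q1]" "lift 0 1 u"] weak1[OF hu hQ1] by simp
    have e: "lift 0 1 Q = App (App (lift 0 1 match) (App (lift 0 1 intro) (lift 0 1 u))) (lift 0 1 L)"
      by (simp add: Q_def memt_def r_def L_def)
    have "conv R (lift 0 1 Q) (App (lift 0 1 u) (lift 0 1 L))" unfolding e using conv_appL[OF c] .
    moreover have "conv R (App (lift 0 1 u) (lift 0 1 L)) (lift 0 1 Q1)"
      by (simp add: u_def, rule beta_conv, simp add: Q1_def)
    ultimately show "conv R (lift 0 1 Q1) (lift 0 1 Q)" by (meson conv_trans conv_sym)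
  qed
  have hbot: "hastype R \<Gamma> bot (Srt Star)" using typ_bot[OF hS] .
  define f where "f = Lam Q1 (App (App (App (Var 0) (lift 0 1 r)) (Lam (Pow (lift 0 1 A)) (Lam (App (Var 0) (lift 0 1 (lift 0 1 r))) (Var 0)))) (Var 0))"
  have hf: "hastype R \<Gamma> f (arrow Q1 bot)"
    unfolding f_def
    using typ_lam_arr[of R Q1 \<Gamma> _ bot] typ_app_arr[OF happ[unfolded negt_def] hhQ]
      typ_arrow[OF hQ1 hbot] by (simp add: rl_def)
  have hfQ: "hastype R \<Gamma> f (negt Q)"
    using typ_cnv[OF hf _ typ_negt[OF hQ]] conv_arrowL[OF conv_sym[OF C1]] by (simp add: negt_def)
  let ?E = "App (lift 0 1 L) (Var 0)"
  let ?D2 = "?E # A # \<Gamma>"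
  have hA2: "hastype R ?D2 (lift 0 2 A) (Srt Box)" using weak1[OF hA1 hE] by simp
  have hr2: "hastype R ?D2 (lift 0 2 r) (lift 0 2 A)" using weak1[OF weak1[OF hr hA] hE] by simp
  have hv1: "hastype R ?D2 (Var 1) (lift 0 2 A)" using weak1[OF hx hE] by simp
  have he: "hastype R ?D2 (Var 0) (eqt (lift 0 2 A) (lift 0 2 r) (Var 1))"
  proof (rule typ_cnv[OF var0[OF hE] _ typ_eqt[OF hA2 hr2 hv1]])
    show "conv R (lift 0 1 ?E) (eqt (lift 0 2 A) (lift 0 2 r) (Var 1))"
      by (simp add: L_def, rule beta_conv, simp)
  qed
  have hp2: "hastype R ?D2 (lift 0 2 p) (Pow (lift 0 2 A))"
    using weak1[OF weak1[OF hp hA] hE] by (simp add: Pow_def)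
  have hep: "hastype R ?D2 (App (Var 0) (lift 0 2 p)) (arrow (App (lift 0 2 p) (lift 0 2 r)) (App (lift 0 2 p) (Var 1)))"
    using hastype.app[OF he[unfolded eqt_def] hp2] by simp
  have hf2: "hastype R ?D2 (lift 0 2 f) (App (lift 0 2 p) (lift 0 2 r))"
  proof (rule typ_cnv)
    show "hastype R ?D2 (lift 0 2 f) (negt (lift 0 2 Q))"
      using weak1[OF weak1[OF hfQ hA] hE] by simp
    show "conv R (negt (lift 0 2 Q)) (App (lift 0 2 p) (lift 0 2 r))"
      by (rule conv_sym, simp add: p_def, rule beta_conv, simp add: Q_def)
    show "hastype R ?D2 (App (lift 0 2 p) (lift 0 2 r)) (Srt Star)"
      using typ_app_arr[OF hp2[unfolded Pow_def] hr2] .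
  qed
  have hb2: "hastype R ?D2 (App (App (Var 0) (lift 0 2 p)) (lift 0 2 f)) (App (lift 0 2 p) (Var 1))"
    using typ_app_arr[OF hep hf2] .
  have hlamE: "hastype R (A # \<Gamma>) (Lam ?E (App (App (Var 0) (lift 0 2 p)) (lift 0 2 f))) (arrow ?E (App (lift 0 1 p) (Var 0)))"
    using typ_lam_arr[of R ?E "A # \<Gamma>" _ "App (lift 0 1 p) (Var 0)"] hb2 hEP by simp
  have hg: "hastype R \<Gamma> (Lam A (Lam ?E (App (App (Var 0) (lift 0 2 p)) (lift 0 2 f)))) Q1"
    unfolding Q1_def by (rule hastype.abs[OF hlamE]) (use hQ1 in \<open>simp add: Q1_def\<close>)
  show ?thesis using typ_app_arr[OF hf hg] by blast
qed


end
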